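(* Let $\bar{A}_{\tau,\sigma}$ have the form $$\bar{A}_{\tau,\sigma}=\alpha_{(0,0)}-\tfrac12\xi_1P_1(\sigma)+\tfrac12\xi_1P_1(\tau)+\sum_{\substack{i+j\ \text{even}\\ i+j>1}}\alpha_{(i,j)}P_i(\tau)P_j(\sigma),$$ with $\xi_1=\frac{1}{2\sqrt3}$ and real $\alpha_{(i,j)}$ (finitely many nonzero, or such that the series converges uniformly on $[0,1]^2$), and let $B_\tau=1$, $C_\tau=\tau$, $\bar{B}_\tau=1-\tau$. Let $(b_i,c_i)_{i=1}^s$ be a quadrature formula on $[0,1]$ with $b_{s+1-i}=b_i$ and $c_{s+1-i}=1-c_i$ for all $i$. Then the $s$-stage RKN method with nodes $c_i$, coefficients $\bar a_{ij}=b_j\bar{A}_{c_i,c_j}$, $\bar b_i=b_i(1-c_i)$ and weights $b_i$ ($i,j=1,\dots,s$) is symmetric.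
   Context: For $q''=f(t,q)$ with smooth $f:\mathbb{R}\times\mathbb{R}^d\to\mathbb{R}^d$, an $s$-stage RKN method with coefficients $(\bar a_{ij},\bar b_i,b_i,c_i)$ and step size $h$ is $$Q_i=q_0+hc_iq'_0+h^2\sum_{j=1}^s\bar a_{ij}f(t_0+c_jh,Q_j),\quad q_1=q_0+hq'_0+h^2\sum_{i=1}^s\bar b_if(t_0+c_ih,Q_i),\quad q'_1=q'_0+h\sum_{i=1}^sb_if(t_0+c_ih,Q_i).$$ A one-step method $\Phi_h$ is symmetric if $\Phi_h=\Phi_{-h}^{-1}$. $P_k$ is the normalized shifted Legendre polynomial: $P_0=1$, $P_k(x)=\frac{\sqrt{2k+1}}{k!}\frac{d^k}{dx^k}[(x^2-x)^k]$, orthonormal in $L^2[0,1]$; e.g. $P_1(x)=\sqrt3(2x-1)$. *)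

theory Defs
  imports "HOL-Analysis.Analysis"
begin

definition legP :: "nat \<Rightarrow> real \<Rightarrow> real" where
  "legP k x = sqrt (2 * real k + 1) / fact k * (deriv ^^ k) (\<lambda>y. (y^2 - y)^k) x"

text \<open>One step of the s-stage RKN method (coefficients abar, bbar, b, c; stages indexed 1..s)
  for q'' = f(t,q), started at time t0 with step size h, mapping (q0,p0) to (q1,p1)
  (p = q'). Since the method is implicit, this is expressed as a relation: there exist
  internal stages Q_1..Q_s solving the stage equations.\<close>
definition rkn_step ::
  "nat \<Rightarrow> (nat \<Rightarrow> nat \<Rightarrow> real) \<Rightarrow> (nat \<Rightarrow> real) \<Rightarrow> (nat \<Rightarrow> real) \<Rightarrow> (nat \<Rightarrow> real)
   \<Rightarrow> (real \<Rightarrow> 'v::real_vector \<Rightarrow> 'v) \<Rightarrow> real \<Rightarrow> real \<Rightarrow> 'v \<Rightarrow> 'v \<Rightarrow> 'v \<Rightarrow> 'v \<Rightarrow> bool" where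
  "rkn_step s abar bbar b c f t0 h q0 p0 q1 p1 \<longleftrightarrow>
     (\<exists>Q :: nat \<Rightarrow> 'v.
        (\<forall>i\<in>{1..s}. Q i = q0 + (h * c i) *\<^sub>R p0
                           + h^2 *\<^sub>R (\<Sum>j=1..s. abar i j *\<^sub>R f (t0 + c j * h) (Q j)))
      \<and> q1 = q0 + h *\<^sub>R p0 + h^2 *\<^sub>R (\<Sum>i=1..s. bbar i *\<^sub>R f (t0 + c i * h) (Q i))
      \<and> p1 = p0 + h *\<^sub>R (\<Sum>i=1..s. b i *\<^sub>R f (t0 + c i * h) (Q i)))"

definition Abar_partial :: "(nat \<times> nat \<Rightarrow> real) \<Rightarrow> nat \<Rightarrow> real \<times> real \<Rightarrow> real" where
  "Abar_partial \<alpha> N = (\<lambda>(\<tau>, \<sigma>).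
      \<alpha> (0,0) - 1/2 * (1 / (2 * sqrt 3)) * legP 1 \<sigma> + 1/2 * (1 / (2 * sqrt 3)) * legP 1 \<tau>
      + (\<Sum>(i,j)\<in>{(i,j). even (i+j) \<and> 1 < i+j \<and> i+j \<le> N}. \<alpha> (i,j) * legP i \<tau> * legP j \<sigma>))"

end

theory Submission
  imports Defs "HOL-Computational_Algebra.Polynomial"
begin

lemma deriv_poly_fun: "deriv (poly p) = poly (pderiv p)"
  by (rule ext, rule DERIV_imp_deriv, rule poly_DERIV)

lemma funpow_deriv_poly: "(deriv ^^ n) (poly p) = poly ((pderiv ^^ n) p)"
  by (induction n) (simp_all add: deriv_poly_fun)

lemma refl_deriv:
  fixes u :: "real \<Rightarrow> real"
  assumes D: "\<And>n x. DERIV ((deriv ^^ n) u) x :> (deriv ^^ Suc n) u x"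
    and S: "\<And>x. u (1 - x) = u x"
  shows "(deriv ^^ n) u (1 - x) = (-1)^n * (deriv ^^ n) u x"
proof (induction n arbitrary: x)
  case 0 then show ?case using S by simp
next
  case (Suc n)
  have eq: "(deriv ^^ n) u = (\<lambda>y. (-1)^n * (deriv ^^ n) u (1 - y))"
  proof (rule ext)
    fix y :: real
    show "(deriv ^^ n) u y = (-1)^n * (deriv ^^ n) u (1 - y)"
      using Suc.IH[of "1 - y"] by simp
  qed
  have "DERIV (\<lambda>y. (-1)^n * (deriv ^^ n) u (1 - y)) (1 - x) :> (-1)^n * ((deriv ^^ Suc n) u x * (-1))"
  proof -
    have d1: "DERIV ((deriv ^^ n) u) (1 - (1 - x)) :> (deriv ^^ Suc n) u x"
      using D[of n x] by simp
    have d2: "DERIV (\<lambda>y. 1 - y) (1 - x) :> (-1::real)"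
      by (auto intro!: derivative_eq_intros)
    show ?thesis by (rule DERIV_cmult, rule DERIV_chain2[OF d1 d2])
  qed
  then have "DERIV ((deriv ^^ n) u) (1 - x) :> (-1)^n * ((deriv ^^ Suc n) u x * (-1))"
    using eq by simp
  then have "(deriv ^^ Suc n) u (1 - x) = (-1)^n * ((deriv ^^ Suc n) u x * (-1))"
    by (simp add: DERIV_imp_deriv)
  then show ?case by simp
qed

lemma legP_refl: "legP k (1 - x) = (-1)^k * legP k x"
proof -
  define p :: "real poly" where "p = [:0, -1, 1:]^k"
  have u: "(\<lambda>y. (y^2 - y)^k) = poly p"
    by (auto intro!: ext simp: p_def poly_power algebra_simps power2_eq_square)
  have D: "(deriv ^^ k) (\<lambda>y::real. (y^2 - y)^k) (1 - x) = (-1)^k * (deriv ^^ k) (\<lambda>y. (y^2 - y)^k) x"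
    unfolding u
  proof (rule refl_deriv)
    fix n and x :: real
    show "DERIV ((deriv ^^ n) (poly p)) x :> (deriv ^^ Suc n) (poly p) x"
      unfolding funpow_deriv_poly by simp
  next
    fix x :: real
    show "poly p (1 - x) = poly p x"
      unfolding u[symmetric] by (simp add: algebra_simps power2_eq_square)
  qed
  show ?thesis unfolding legP_def D by (rule mult.left_commute)
qed

lemma legP1: "legP 1 x = sqrt 3 * (2 * x - 1)"
proof -
  have d1: "deriv (\<lambda>y::real. (y^2 - y)^1) x = 2 * x - 1"
    by (rule DERIV_imp_deriv) (auto intro!: derivative_eq_intros)
  have d2: "(deriv ^^ 1) (\<lambda>y::real. (y^2 - y)^1) = deriv (\<lambda>y. (y^2 - y)^1)"
    by simp
  have d3: "sqrt (2 * real 1 + 1) / fact 1 = sqrt 3" by simp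
  show ?thesis unfolding legP_def d2 d1 d3 by (rule refl)
qed


lemma Abar_partial_refl:
  "Abar_partial \<alpha> N (1 - \<tau>, 1 - \<sigma>) = Abar_partial \<alpha> N (\<tau>, \<sigma>) - \<tau> + \<sigma>"
proof -
  have sum_eq: "(\<Sum>(i,j)\<in>{(i,j). even (i+j) \<and> 1 < i+j \<and> i+j \<le> N}. \<alpha> (i,j) * legP i (1-\<tau>) * legP j (1-\<sigma>))
     = (\<Sum>(i,j)\<in>{(i,j). even (i+j) \<and> 1 < i+j \<and> i+j \<le> N}. \<alpha> (i,j) * legP i \<tau> * legP j \<sigma>)"
  proof (rule sum.cong[OF refl], clarify)
    fix i j :: nat assume "even (i+j)"
    then have "((-1::real)^i * (-1)^j) = 1"
      by (simp add: power_add[symmetric])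
    then show "\<alpha> (i,j) * legP i (1-\<tau>) * legP j (1-\<sigma>) = \<alpha> (i,j) * legP i \<tau> * legP j \<sigma>"
      unfolding legP_refl by (metis (no_types, lifting) mult.commute mult.left_commute mult_1)
  qed
  have s3: "sqrt 3 * sqrt 3 = (3::real)" by simp
  have s3': "sqrt 3 * (sqrt 3 * x) = (3::real) * x" for x by (simp add: mult.assoc[symmetric])
  show ?thesis unfolding Abar_partial_def split sum_eq legP1
    by (simp add: field_simps s3 s3')
qed

lemma A_refl:
  fixes \<alpha> :: "nat \<times> nat \<Rightarrow> real" and A :: "real \<Rightarrow> real \<Rightarrow> real"
  assumes A_def: "uniform_limit ({0..1} \<times> {0..1}) (Abar_partial \<alpha>) (\<lambda>(\<tau>, \<sigma>). A \<tau> \<sigma>) sequentially"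
    and "\<tau> \<in> {0..1}" "\<sigma> \<in> {0..1}"
  shows "A (1 - \<tau>) (1 - \<sigma>) = A \<tau> \<sigma> - \<tau> + \<sigma>"
proof -
  have l1: "(\<lambda>N. Abar_partial \<alpha> N (\<tau>, \<sigma>)) \<longlonglongrightarrow> A \<tau> \<sigma>"
    using tendsto_uniform_limitI[OF A_def, of "(\<tau>, \<sigma>)"] assms by simp
  have l2: "(\<lambda>N. Abar_partial \<alpha> N (1 - \<tau>, 1 - \<sigma>)) \<longlonglongrightarrow> A (1 - \<tau>) (1 - \<sigma>)"
    using tendsto_uniform_limitI[OF A_def, of "(1 - \<tau>, 1 - \<sigma>)"] assms by simp
  have l3: "(\<lambda>N. Abar_partial \<alpha> N (1 - \<tau>, 1 - \<sigma>)) \<longlonglongrightarrow> A \<tau> \<sigma> - \<tau> + \<sigma>"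
    unfolding Abar_partial_refl by (intro tendsto_intros l1)
  show ?thesis using LIMSEQ_unique[OF l2 l3] .
qed

theorem corollary4p2:
  fixes \<alpha> :: "nat \<times> nat \<Rightarrow> real"
    and A :: "real \<Rightarrow> real \<Rightarrow> real"
    and s :: nat and b c :: "nat \<Rightarrow> real"
    and f :: "real \<Rightarrow> real ^ 'd \<Rightarrow> real ^ 'd"
    and t0 h :: real and q0 p0 q1 p1 :: "real ^ 'd"
  assumes A_def: "uniform_limit ({0..1} \<times> {0..1}) (Abar_partial \<alpha>) (\<lambda>(\<tau>, \<sigma>). A \<tau> \<sigma>) sequentially"
    and nodes: "\<forall>i\<in>{1..s}. c i \<in> {0..1}"
    and symb: "\<forall>i\<in>{1..s}. b (s + 1 - i) = b i"
    and symc: "\<forall>i\<in>{1..s}. c (s + 1 - i) = 1 - c i"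
    and step: "rkn_step s (\<lambda>i j. b j * A (c i) (c j)) (\<lambda>i. b i * (1 - c i)) b c f t0 h q0 p0 q1 p1"
  shows "rkn_step s (\<lambda>i j. b j * A (c i) (c j)) (\<lambda>i. b i * (1 - c i)) b c f (t0 + h) (- h) q1 p1 q0 p0"
proof -
  obtain Q where
    hQ: "\<forall>i\<in>{1..s}. Q i = q0 + (h * c i) *\<^sub>R p0
                           + h^2 *\<^sub>R (\<Sum>j=1..s. (b j * A (c i) (c j)) *\<^sub>R f (t0 + c j * h) (Q j))"
    and hq1: "q1 = q0 + h *\<^sub>R p0 + h^2 *\<^sub>R (\<Sum>i=1..s. (b i * (1 - c i)) *\<^sub>R f (t0 + c i * h) (Q i))"
    and hp1: "p1 = p0 + h *\<^sub>R (\<Sum>i=1..s. b i *\<^sub>R f (t0 + c i * h) (Q i))"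
    using step unfolding rkn_step_def by blast
  define F where "F j = f (t0 + c j * h) (Q j)" for j
  define Q' where "Q' i = Q (s + 1 - i)" for i
  have R: "(\<Sum>i=1..s. g (s + 1 - i)) = (\<Sum>i=1..s. g i)" for g :: "nat \<Rightarrow> real^'d"
    using sum.atLeastAtMost_rev[of g 1 s] by simp
  have Ft: "f (t0 + h + c i * - h) (Q' i) = F (s + 1 - i)" if "i \<in> {1..s}" for i
  proof -
    have e1: "c (s + 1 - i) = 1 - c i" using symc that by blast
    have e2: "t0 + h + c i * - h = t0 + (1 - c i) * h" by (simp add: algebra_simps)
    show ?thesis unfolding F_def Q'_def e1 e2 by (rule refl)
  qed
  have cr: "c j = 1 - c (s + 1 - j)" if "j \<in> {1..s}" for j
  proof -
    have m: "s + 1 - j \<in> {1..s}" using that by auto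
    have "s + 1 - (s + 1 - j) = j" using that by auto
    then show ?thesis using symc[rule_format, OF m] by simp
  qed
  have br: "b j = b (s + 1 - j)" if "j \<in> {1..s}" for j
  proof -
    have m: "s + 1 - j \<in> {1..s}" using that by auto
    have "s + 1 - (s + 1 - j) = j" using that by auto
    then show ?thesis using symb[rule_format, OF m] by simp
  qed
  define SB where "SB = (\<Sum>i=1..s. b i *\<^sub>R F i)"
  define SBC where "SBC = (\<Sum>i=1..s. (b i * c i) *\<^sub>R F i)"
  have hq1': "q1 = q0 + h *\<^sub>R p0 + h^2 *\<^sub>R (SB - SBC)"
  proof -
    have "(\<Sum>i=1..s. (b i * (1 - c i)) *\<^sub>R F i) = SB - SBC"
      unfolding SB_def SBC_def sum_subtractf[symmetric]
      by (rule sum.cong) (simp_all add: algebra_simps)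
    then show ?thesis using hq1 by (simp add: F_def)
  qed
  have hp1': "p1 = p0 + h *\<^sub>R SB" using hp1 by (simp add: SB_def F_def)
  have e3: "p0 = p1 + (- h) *\<^sub>R (\<Sum>i=1..s. b i *\<^sub>R f (t0 + h + c i * - h) (Q' i))"
  proof -
    have "(\<Sum>i=1..s. b i *\<^sub>R f (t0 + h + c i * - h) (Q' i)) = (\<Sum>i=1..s. b (s+1-i) *\<^sub>R F (s + 1 - i))"
    proof (rule sum.cong[OF refl])
      fix i assume i: "i \<in> {1..s}"
      show "b i *\<^sub>R f (t0 + h + c i * - h) (Q' i) = b (s+1-i) *\<^sub>R F (s + 1 - i)"
        unfolding Ft[OF i] br[OF i, symmetric] by (rule refl)
    qed
    also have "\<dots> = SB" unfolding SB_def by (rule R)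
    finally show ?thesis using hp1' by simp
  qed
  have e2: "q0 = q1 + (- h) *\<^sub>R p1 + (- h)^2 *\<^sub>R (\<Sum>i=1..s. (b i * (1 - c i)) *\<^sub>R f (t0 + h + c i * - h) (Q' i))"
  proof -
    have "(\<Sum>i=1..s. (b i * (1 - c i)) *\<^sub>R f (t0 + h + c i * - h) (Q' i))
        = (\<Sum>i=1..s. (b (s+1-i) * c (s+1-i)) *\<^sub>R F (s + 1 - i))"
    proof (rule sum.cong[OF refl])
      fix i assume i: "i \<in> {1..s}"
      show "(b i * (1 - c i)) *\<^sub>R f (t0 + h + c i * - h) (Q' i) = (b (s+1-i) * c (s+1-i)) *\<^sub>R F (s + 1 - i)"
        unfolding Ft[OF i] br[OF i, symmetric] symc[rule_format, OF i] by (rule refl)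
    qed
    also have "\<dots> = SBC" unfolding SBC_def by (rule R)
    finally have S: "(\<Sum>i=1..s. (b i * (1 - c i)) *\<^sub>R f (t0 + h + c i * - h) (Q' i)) = SBC" .
    show ?thesis unfolding S hp1' hq1'
      by (simp add: algebra_simps power2_eq_square)
  qed
  have e1: "Q' i = q1 + (- h * c i) *\<^sub>R p1
       + (- h)^2 *\<^sub>R (\<Sum>j=1..s. (b j * A (c i) (c j)) *\<^sub>R f (t0 + h + c j * - h) (Q' j))"
    if i: "i \<in> {1..s}" for i
  proof -
    define k where "k = s + 1 - i"
    have k: "k \<in> {1..s}" and ik: "i = s + 1 - k" using i by (auto simp: k_def)
    have ci: "c i = 1 - c k" using symc i k_def by auto
    define SA where "SA = (\<Sum>j=1..s. (b j * A (c k) (c j)) *\<^sub>R F j)"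
    have Qk: "Q' i = q0 + (h * c k) *\<^sub>R p0 + h^2 *\<^sub>R SA"
    proof -
      have "Q' i = Q k" unfolding Q'_def k_def by (rule refl)
      also have "Q k = q0 + (h * c k) *\<^sub>R p0 + h^2 *\<^sub>R SA"
        unfolding SA_def F_def using hQ k by blast
      finally show ?thesis .
    qed
    have "(\<Sum>j=1..s. (b j * A (c i) (c j)) *\<^sub>R f (t0 + h + c j * - h) (Q' j))
        = (\<Sum>j=1..s. (b (s+1-j) * A (1 - c k) (1 - c (s+1-j))) *\<^sub>R F (s + 1 - j))"
    proof (rule sum.cong[OF refl])
      fix j assume j: "j \<in> {1..s}"
      show "(b j * A (c i) (c j)) *\<^sub>R f (t0 + h + c j * - h) (Q' j) = (b (s+1-j) * A (1 - c k) (1 - c (s+1-j))) *\<^sub>R F (s + 1 - j)"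
        unfolding Ft[OF j] unfolding br[OF j] cr[OF j] ci by (rule refl)
    qed
    also have "\<dots> = (\<Sum>j=1..s. (b j * A (1 - c k) (1 - c j)) *\<^sub>R F j)" by (rule R)
    also have "\<dots> = (\<Sum>j=1..s. (b j * A (c k) (c j)) *\<^sub>R F j - c k *\<^sub>R (b j *\<^sub>R F j) + (b j * c j) *\<^sub>R F j)"
    proof (rule sum.cong[OF refl])
      fix j assume j: "j \<in> {1..s}"
      have Ar: "A (1 - c k) (1 - c j) = A (c k) (c j) - c k + c j"
        using A_refl[OF A_def] nodes k j by blast
      then show "(b j * A (1 - c k) (1 - c j)) *\<^sub>R F j = (b j * A (c k) (c j)) *\<^sub>R F j - c k *\<^sub>R (b j *\<^sub>R F j) + (b j * c j) *\<^sub>R F j"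
        unfolding Ar by (simp add: algebra_simps)
    qed
    also have "\<dots> = SA - c k *\<^sub>R SB + SBC"
      by (simp add: SA_def SB_def SBC_def sum.distrib sum_subtractf scaleR_sum_right)
    finally have S1: "(\<Sum>j=1..s. (b j * A (c i) (c j)) *\<^sub>R f (t0 + h + c j * - h) (Q' j)) = SA - c k *\<^sub>R SB + SBC" .
    show ?thesis unfolding Qk S1 unfolding hp1' hq1' ci
      by (simp add: algebra_simps power2_eq_square)
  qed
  show ?thesis unfolding rkn_step_def
    using e1 e2 e3 by blast
qed

end
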